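(* Let $R$ be a $*$-ring and equip the power series ring $R[[x]]$ with the involution $(\sum_{i\ge0}a_ix^i)^*=\sum_{i\ge0}a_i^*x^i$. Then $R[[x]]$ is $*$-clean if and only if $R$ is $*$-clean.
   Context: A $*$-ring is a ring with identity with an involution $*$. A projection is $p$ with $p^2=p=p^*$. A $*$-ring is $*$-clean if every element is a sum of a projection and a unit. *)

theory Defs
  imports "HOL-Computational_Algebra.Formal_Power_Series"
begin

definition star_ring :: "('a::ring_1 \<Rightarrow> 'a) \<Rightarrow> bool" where
  "star_ring s \<longleftrightarrow> (\<forall>a b. s (a + b) = s a + s b) \<and> (\<forall>a b. s (a * b) = s b * s a)
                   \<and> (\<forall>a. s (s a) = a)"

definition is_projection :: "('a::ring_1 \<Rightarrow> 'a) \<Rightarrow> 'a \<Rightarrow> bool" where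
  "is_projection s p \<longleftrightarrow> p * p = p \<and> s p = p"

definition is_unit_ring :: "'a::ring_1 \<Rightarrow> bool" where
  "is_unit_ring u \<longleftrightarrow> (\<exists>v. u * v = 1 \<and> v * u = 1)"

definition star_clean :: "('a::ring_1 \<Rightarrow> 'a) \<Rightarrow> bool" where
  "star_clean s \<longleftrightarrow> (\<forall>a. \<exists>p u. is_projection s p \<and> is_unit_ring u \<and> a = p + u)"

definition fps_star :: "('a::ring_1 \<Rightarrow> 'a) \<Rightarrow> 'a fps \<Rightarrow> 'a fps" where
  "fps_star s f = Abs_fps (\<lambda>n. s (fps_nth f n))"

end

theory Submission
  imports Defs
begin

unbundle fps_syntax

function rinv :: "'a::ring_1 fps \<Rightarrow> 'a \<Rightarrow> nat \<Rightarrow> 'a" where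
  "rinv f w n = (if n = 0 then w else - w * (\<Sum>i\<in>{1..n}. f $ i * rinv f w (n - i)))"
  by auto
termination by (relation "measure (\<lambda>(f,w,n). n)") auto

declare rinv.simps[simp del]

lemma rinv_right:
  fixes f :: "'a::ring_1 fps"
  assumes "f $ 0 * w = 1"
  shows "f * Abs_fps (rinv f w) = 1"
proof (rule fps_ext)
  fix n
  show "(f * Abs_fps (rinv f w)) $ n = 1 $ n"
  proof (cases "n = 0")
    case True
    then show ?thesis using assms by (simp add: fps_mult_nth rinv.simps)
  next
    case False
    define S where "S = (\<Sum>i\<in>{1..n}. f $ i * rinv f w (n - i))"
    have "(f * Abs_fps (rinv f w)) $ n = (\<Sum>i=0..n. f $ i * rinv f w (n - i))"
      by (simp add: fps_mult_nth)
    also have "\<dots> = f $ 0 * rinv f w n + S"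
      unfolding S_def by (simp add: sum.atLeast_Suc_atMost)
    also have "rinv f w n = - w * S" using False unfolding S_def by (simp add: rinv.simps)
    also have "f $ 0 * (- w * S) + S = 0"
      by (simp add: mult.assoc[symmetric] assms)
    finally show ?thesis using False by simp
  qed
qed

lemma unit_fps:
  fixes f :: "'a::ring_1 fps"
  assumes "is_unit_ring (f $ 0)"
  shows "is_unit_ring f"
proof -
  obtain w where w: "f $ 0 * w = 1" "w * f $ 0 = 1" using assms unfolding is_unit_ring_def by blast
  define V where "V = Abs_fps (rinv f w)"
  have FV: "f * V = 1" using rinv_right[OF w(1)] V_def by simp
  have V0: "V $ 0 = w" by (simp add: V_def rinv.simps)
  obtain W where VW: "V * W = 1" using rinv_right[of V "f $ 0"] V0 w(2) by blast
  have "f = W" by (metis FV VW mult.assoc mult_1_left mult_1_right)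
  with FV VW show ?thesis unfolding is_unit_ring_def by blast
qed

theorem proposition2p8:
  fixes s :: "'a::ring_1 \<Rightarrow> 'a"
  assumes "star_ring s"
  shows "star_clean (fps_star s) \<longleftrightarrow> star_clean s"
proof
  assume H: "star_clean (fps_star s)"
  show "star_clean s" unfolding star_clean_def
  proof
    fix a
    obtain P U where PU: "is_projection (fps_star s) P" "is_unit_ring U" "fps_const a = P + U"
      using H unfolding star_clean_def by blast
    have "a = P $ 0 + U $ 0" using arg_cong[OF PU(3), of "\<lambda>f. f $ 0"] by simp
    moreover have "is_projection s (P $ 0)"
    proof -
      have "(P*P) $ 0 = P $ 0" "fps_star s P $ 0 = P $ 0" using PU(1) unfolding is_projection_def by auto
      then show ?thesis unfolding is_projection_def fps_star_def by (simp add: fps_mult_nth)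
    qed
    moreover have "is_unit_ring (U $ 0)"
    proof -
      obtain V where "U*V = 1" "V*U = 1" using PU(2) unfolding is_unit_ring_def by blast
      then have "(U*V) $ 0 = 1" "(V*U) $ 0 = 1" by auto
      then show ?thesis unfolding is_unit_ring_def by (auto simp: fps_mult_nth)
    qed
    ultimately show "\<exists>p u. is_projection s p \<and> is_unit_ring u \<and> a = p + u" by blast
  qed
next
  assume H: "star_clean s"
  have s0: "s 0 = 0"
  proof -
    have "s (0+0) = s 0 + s 0" using assms unfolding star_ring_def by blast
    then show ?thesis by simp
  qed
  show "star_clean (fps_star s)" unfolding star_clean_def
  proof
    fix f :: "'a fps"
    obtain p u where pu: "is_projection s p" "is_unit_ring u" "f $ 0 = p + u"
      using H unfolding star_clean_def by blast
    have "is_projection (fps_star s) (fps_const p)"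
    proof -
      have "fps_star s (fps_const p) = fps_const p"
        using pu(1) s0 unfolding fps_star_def is_projection_def
        by (intro fps_ext) auto
      moreover have "fps_const p * fps_const p = fps_const p"
        using pu(1) unfolding is_projection_def by (simp add: fps_const_mult[symmetric])
      ultimately show ?thesis unfolding is_projection_def by simp
    qed
    moreover have "is_unit_ring (f - fps_const p)"
      by (rule unit_fps) (use pu in simp)
    ultimately show "\<exists>P U. is_projection (fps_star s) P \<and> is_unit_ring U \<and> f = P + U"
      by (metis add.commute diff_add_cancel)
  qed
qed

end
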